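(* Let $\mathbb{F}_q$ be a finite field, let $K,N,f,d$ be positive integers with $N \ge (K-1)d+3f+1$, and let $G_\mathcal{L}\in\mathbb{F}_q^{K\times N}$ be the Lagrange generator matrix defined in the context, with $i$-th column $(G_\mathcal{L})_i$. Let $\mathbf{B}=(b_{k,k'})_{k,k'\in[K]}$ and $\mathbf{B}'=(b'_{k,k'})_{k,k'\in[K]}$ be $K\times K$ arrays whose entries lie in $\mathbb{F}_q^{Q\times R}$. Suppose the $N$ nodes, indexed by $[N]$, are partitioned into correct nodes and at most $f$ Byzantine nodes, and suppose there exist sets $\mathcal{I},\mathcal{J}\subseteq[N]$ with $|\mathcal{I}|=|\mathcal{J}|=N-f$ such that for every correct node $i\in\mathcal{I}$ and every correct node $j\in\mathcal{J}$, $$w_{i,j}:=(G_\mathcal{L})_i^\intercal\,\mathbf{B}\,(G_\mathcal{L})_j \;=\; (G_\mathcal{L})_j^\intercal\,(\mathbf{B}')^\intercal\,(G_\mathcal{L})_i=:u_{j,i}.$$ (This is exactly what a valid $(N-f,N)$-threshold signature on the quorum identifier of $\mathcal{I}$ certifies in the protocol.) Then $\mathbf{B}=\mathbf{B}'$.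
   Context: Fix mutually disjoint sets of distinct elements $\{\alpha_1,\ldots,\alpha_N\}$ and $\{\omega_1,\ldots,\omega_K\}$ of $\mathbb{F}_q$. For $k\in[K]$ let $\Phi_k(z)=\prod_{j\in[K],j\ne k}\frac{z-\omega_j}{\omega_k-\omega_j}$, and let $G_\mathcal{L}$ be the $K\times N$ matrix with $(k,i)$ entry $\Phi_k(\alpha_i)$. For a $K\times K$ array $\mathbf{M}=(m_{k,k'})$ with entries in the $\mathbb{F}_q$-vector space $\mathbb{F}_q^{Q\times R}$ and column vectors $x,y\in\mathbb{F}_q^K$, $x^\intercal \mathbf{M} y$ denotes $\sum_{k,k'}x_k m_{k,k'}y_{k'}\in\mathbb{F}_q^{Q\times R}$, and $\mathbf{M}^\intercal$ denotes the $K\times K$ array whose $(k,k')$ entry is $m_{k',k}$ (entries themselves are not transposed). In the paper, $\mathbf{B}$ is the block from which node $i$'s coded outgoing strip $(G_\mathcal{L})_i^\intercal\mathbf{B}$ is formed and $\mathbf{B}'$ the block from which its coded incoming strip $(G_\mathcal{L})_i^\intercal(\mathbf{B}')^\intercal$ is formed; $d\ge 1$ is the degree of the verification polynomial. *)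

theory Defs
  imports Main
begin

text \<open>Nodes are indexed by 0..<N and the Lagrange points/basis by 0..<K.
  An element of F_q^(Q x R) is modelled as a function nat => nat => 'a,
  read on the index range q < Q, r < R.  A K x K array with such entries is
  a function nat => nat => (nat => nat => 'a).\<close>

definition lagrange_basis :: "(nat \<Rightarrow> 'a::field) \<Rightarrow> nat \<Rightarrow> nat \<Rightarrow> 'a \<Rightarrow> 'a" where
  "lagrange_basis \<omega> K k z = (\<Prod>j\<in>{0..<K} - {k}. (z - \<omega> j) / (\<omega> k - \<omega> j))"

definition GL :: "(nat \<Rightarrow> 'a::field) \<Rightarrow> (nat \<Rightarrow> 'a) \<Rightarrow> nat \<Rightarrow> nat \<Rightarrow> nat \<Rightarrow> 'a" where
  "GL \<alpha> \<omega> K k i = lagrange_basis \<omega> K k (\<alpha> i)"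

definition bilin :: "nat \<Rightarrow> (nat \<Rightarrow> 'a::field) \<Rightarrow> (nat \<Rightarrow> nat \<Rightarrow> nat \<Rightarrow> nat \<Rightarrow> 'a) \<Rightarrow> (nat \<Rightarrow> 'a)
    \<Rightarrow> nat \<Rightarrow> nat \<Rightarrow> 'a" where
  "bilin K x M y = (\<lambda>q r. \<Sum>k<K. \<Sum>k'<K. x k * M k k' q r * y k')"

text \<open>Array transpose (entries themselves are not transposed).\<close>
definition arr_T :: "(nat \<Rightarrow> nat \<Rightarrow> 'b) \<Rightarrow> nat \<Rightarrow> nat \<Rightarrow> 'b" where
  "arr_T M k k' = M k' k"

definition mat_eq :: "nat \<Rightarrow> nat \<Rightarrow> (nat \<Rightarrow> nat \<Rightarrow> 'a) \<Rightarrow> (nat \<Rightarrow> nat \<Rightarrow> 'a) \<Rightarrow> bool" where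
  "mat_eq Q R A A' \<longleftrightarrow> (\<forall>q<Q. \<forall>r<R. A q r = A' q r)"

end

theory Submission
  imports Defs "HOL-Computational_Algebra.Polynomial"
begin

lemma lagA: "poly (\<Sum>k<K. smult (c k) (\<Prod>j\<in>{0..<K}-{k}. smult (inverse (\<omega> k - \<omega> j)) [:-\<omega> j,1:])) x
   = (\<Sum>k<K. c k * lagrange_basis \<omega> K k (x::'a::field))"
    unfolding lagrange_basis_def poly_sum poly_smult poly_prod
    by (intro sum.cong refl arg_cong2[where f="(*)"] prod.cong) (simp_all add: divide_inverse mult.commute)
lemma lagC: assumes "inj_on \<omega> {0..<K}" "k < K"
  shows "lagrange_basis \<omega> K k (\<omega> k) = (1::'a::field)"
  unfolding lagrange_basis_def
proof (rule prod.neutral, rule ballI)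
  fix j assume "j \<in> {0..<K}-{k}"
  hence "\<omega> k \<noteq> \<omega> j" using assms by (auto dest: inj_onD)
  thus "(\<omega> k - \<omega> j) / (\<omega> k - \<omega> j) = 1" by simp
qed
lemma lagD: assumes "m < K" "k \<noteq> m"
  shows "lagrange_basis \<omega> K k (\<omega> m) = (0::'a::field)"
  unfolding lagrange_basis_def
  by (rule prod_zero) (use assms in auto)

lemma lag_zero:
  fixes \<omega> :: "nat \<Rightarrow> 'a::field" and c :: "nat \<Rightarrow> 'a"
  assumes inj: "inj_on \<omega> {0..<K}" and fin: "finite X" and cardX: "card X \<ge> K"
    and h: "\<forall>x\<in>X. (\<Sum>k<K. c k * lagrange_basis \<omega> K k x) = 0"
  shows "\<forall>m<K. c m = 0"
proof (intro allI impI)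
  fix m assume m: "m < K"
  define P where "P = (\<Sum>k<K. smult (c k) (\<Prod>j\<in>{0..<K}-{k}. smult (inverse (\<omega> k - \<omega> j)) [:-\<omega> j,1:]))"
  have polyP: "poly P x = (\<Sum>k<K. c k * lagrange_basis \<omega> K k x)" for x
    unfolding P_def by (rule lagA)
  have dg: "degree P \<le> K - 1"
    unfolding P_def
  proof (rule degree_sum_le)
    fix k assume "k \<in> {..<K}"
    hence ck: "card ({0..<K}-{k}) = K - 1" by simp
    have "degree (\<Prod>j\<in>{0..<K}-{k}. smult (inverse (\<omega> k - \<omega> j)) [:-\<omega> j,1:])
        \<le> sum (degree \<circ> (\<lambda>j. smult (inverse (\<omega> k - \<omega> j)) [:-\<omega> j,1:])) ({0..<K}-{k})"
      by (rule degree_prod_sum_le) simp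
    also have "\<dots> \<le> sum (\<lambda>_. 1) ({0..<K}-{k})"
      by (intro sum_mono) simp
    also have "\<dots> = K - 1" using ck by simp
    finally show "degree (smult (c k) (\<Prod>j\<in>{0..<K}-{k}. smult (inverse (\<omega> k - \<omega> j)) [:-\<omega> j,1:])) \<le> K - 1"
      by (meson degree_smult_le order_trans)
  qed simp
  have P0: "P = 0"
  proof (rule ccontr)
    assume "P \<noteq> 0"
    hence "card {x. poly P x = 0} \<le> degree P" by (rule card_poly_roots_bound)
    moreover have "X \<subseteq> {x. poly P x = 0}" using h polyP by auto
    moreover have "finite {x. poly P x = 0}" using \<open>P \<noteq> 0\<close> poly_roots_finite by blast
    ultimately have "card X \<le> K - 1" using dg card_mono by (meson order_trans)
    thus False using cardX m by simp
  qed
  have lb: "lagrange_basis \<omega> K k (\<omega> m) = (if k = m then 1 else 0)" if k: "k < K" for k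
    using lagC[OF inj k] lagD[OF m] by auto
  have "0 = poly P (\<omega> m)" using P0 by simp
  also have "\<dots> = (\<Sum>k<K. c k * (if k = m then 1 else 0))"
    unfolding polyP by (intro sum.cong refl) (simp add: lb)
  also have "\<dots> = c m" using m by (simp add: if_distrib sum.delta' cong: if_cong)
  finally show "c m = 0" by simp
qed

theorem lemma1:
  fixes \<alpha> \<omega> :: "nat \<Rightarrow> 'a::{finite, field}"
    and K N f d Q R :: nat
    and B B' :: "nat \<Rightarrow> nat \<Rightarrow> nat \<Rightarrow> nat \<Rightarrow> 'a"
    and C I J :: "nat set"
  assumes "K > 0" "N > 0" "f > 0" "d > 0"
    and "N \<ge> (K - 1) * d + 3 * f + 1"
    and "inj_on \<alpha> {0..<N}" "inj_on \<omega> {0..<K}"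
    and "\<alpha> ` {0..<N} \<inter> \<omega> ` {0..<K} = {}"
    and "C \<subseteq> {0..<N}" "card ({0..<N} - C) \<le> f"
    and "I \<subseteq> {0..<N}" "J \<subseteq> {0..<N}"
    and "card I = N - f" "card J = N - f"
    and "\<forall>i\<in>I \<inter> C. \<forall>j\<in>J \<inter> C.
           mat_eq Q R (bilin K (\<lambda>k. GL \<alpha> \<omega> K k i) B (\<lambda>k. GL \<alpha> \<omega> K k j))
                      (bilin K (\<lambda>k. GL \<alpha> \<omega> K k j) (arr_T B') (\<lambda>k. GL \<alpha> \<omega> K k i))"
  shows "\<forall>k<K. \<forall>k'<K. mat_eq Q R (B k k') (B' k k')"
proof -
  have Kle: "K - 1 \<le> (K - 1) * d" using mult_le_mono2[of 1 d "K-1"] assms(4) by simp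
  have cardbig: "card (X \<inter> C) \<ge> K" if X: "X \<subseteq> {0..<N}" "card X = N - f" for X
  proof -
    have "X \<subseteq> (X \<inter> C) \<union> ({0..<N} - C)" using X by auto
    moreover have "finite ((X \<inter> C) \<union> ({0..<N} - C))"
      by (rule finite_subset[of _ "{0..<N}"]) (use X(1) in auto)
    ultimately have "card X \<le> card ((X \<inter> C) \<union> ({0..<N} - C))" by (simp add: card_mono)
    also have "\<dots> \<le> card (X \<inter> C) + card ({0..<N} - C)" by (rule card_Un_le)
    finally have "card X \<le> card (X \<inter> C) + card ({0..<N} - C)" .
    thus ?thesis using X(2) assms(5,10) Kle by linarith
  qed
  have finS: "finite (X \<inter> C)" if "X \<subseteq> {0..<N}" for X
    by (rule finite_subset[of _ "{0..<N}"]) (use that in auto)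
  have cardimg: "card (\<alpha> ` (X \<inter> C)) \<ge> K" if X: "X \<subseteq> {0..<N}" "card X = N - f" for X
  proof -
    have "inj_on \<alpha> (X \<inter> C)" by (rule inj_on_subset[OF assms(6)]) (use X(1) in auto)
    thus ?thesis using cardbig[OF X] by (simp add: card_image)
  qed
  let ?G = "\<lambda>k i. GL \<alpha> \<omega> K k i"
  show ?thesis
  proof (intro allI impI)
    fix m k' assume m: "m < K" and k': "k' < K"
    show "mat_eq Q R (B m k') (B' m k')"
      unfolding mat_eq_def
    proof (intro allI impI)
      fix q r assume q: "q < Q" and r: "r < R"
      define D where "D k k' = B k k' q r - B' k k' q r" for k k'
      have key: "(\<Sum>k<K. (\<Sum>k'<K. D k k' * ?G k' j) * lagrange_basis \<omega> K k (\<alpha> i)) = 0"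
        if i: "i \<in> I \<inter> C" and j: "j \<in> J \<inter> C" for i j
      proof -
        have me: "mat_eq Q R (bilin K (\<lambda>k. ?G k i) B (\<lambda>k. ?G k j))
                      (bilin K (\<lambda>k. ?G k j) (arr_T B') (\<lambda>k. ?G k i))"
          using assms(15) i j by blast
        have e: "(\<Sum>k<K. \<Sum>k'<K. ?G k i * B k k' q r * ?G k' j)
               = (\<Sum>k<K. \<Sum>k'<K. ?G k j * B' k' k q r * ?G k' i)"
          using me q r unfolding mat_eq_def bilin_def arr_T_def by simp
        also have "\<dots> = (\<Sum>k'<K. \<Sum>k<K. ?G k j * B' k' k q r * ?G k' i)"
          by (rule sum.swap)
        also have "\<dots> = (\<Sum>k<K. \<Sum>k'<K. ?G k i * B' k k' q r * ?G k' j)"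
          by (intro sum.cong refl) (simp only: mult.commute mult.left_commute)
        finally have e2: "(\<Sum>k<K. \<Sum>k'<K. ?G k i * B k k' q r * ?G k' j)
                  - (\<Sum>k<K. \<Sum>k'<K. ?G k i * B' k k' q r * ?G k' j) = 0" by simp
        have "(\<Sum>k<K. (\<Sum>k'<K. D k k' * ?G k' j) * lagrange_basis \<omega> K k (\<alpha> i))
            = (\<Sum>k<K. \<Sum>k'<K. ?G k i * B k k' q r * ?G k' j - ?G k i * B' k k' q r * ?G k' j)"
          unfolding sum_distrib_right
          by (intro sum.cong refl) (simp add: D_def GL_def algebra_simps)
        also have "\<dots> = 0" using e2 by (simp only: sum_subtractf)
        finally show ?thesis .
      qed
      have step1: "\<forall>k<K. (\<Sum>k'<K. D k k' * ?G k' j) = 0" if j: "j \<in> J \<inter> C" for j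
        by (rule lag_zero[OF assms(7) finite_imageI[OF finS[OF assms(11)]] cardimg[OF assms(11,13)]])
           (use key j in auto)
      have "\<forall>k'<K. D m k' = 0"
        by (rule lag_zero[OF assms(7) finite_imageI[OF finS[OF assms(12)]] cardimg[OF assms(12,14)]])
           (use step1 m in \<open>auto simp: GL_def mult_ac\<close>)
      thus "B m k' q r = B' m k' q r" using k' unfolding D_def by simp
    qed
  qed
qed

end
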